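(* Fix $\lambda>0$. (i) For every $\phi\in\mathscr F$, $\mathcal M^\lambda\phi(x)\in\mathbb R$ for all $x\in\mathbb R$. (ii) For all $\phi_1,\phi_2\in\mathscr F$, $\|\mathcal M^\lambda\phi_1-\mathcal M^\lambda\phi_2\|_{L^\infty(\mathbb R)}\le\|\phi_1-\phi_2\|_{L^\infty(\mathbb R)}$. (iii) $\mathcal M^\lambda$ is concave: for $\phi_1,\phi_2\in\mathscr F$ and $\eta\in[0,1]$, $\mathcal M^\lambda[\eta\phi_1+(1-\eta)\phi_2]\ge\eta\mathcal M^\lambda\phi_1+(1-\eta)\mathcal M^\lambda\phi_2$. (iv) $\mathcal M^\lambda$ is nondecreasing: if $\phi_1,\phi_2\in\mathscr F$ with $\phi_1\le\phi_2$ on $\mathbb R$, then $\mathcal M^\lambda\phi_1\le\mathcal M^\lambda\phi_2$.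
   Context: Let $l:\mathbb R\to\mathbb R$ satisfy: there is $K>0$ with $\inf l=l(0)=K$ and $l(x)+l(y)\ge l(x+y)+K$ for all $x,y$; $l(\xi)\to+\infty$ as $|\xi|\to\infty$; $l$ is $L_l$-Lipschitz for some $L_l>0$. For $x\in\mathbb R$, $\Phi_x=\mathcal N(-x,1)$. For $\lambda>0$ and $\phi$ bounded below, $\mathcal M^\lambda\phi(x)=\inf\{\int_{\mathbb R}(\phi(x+\xi)+l(\xi))\mu(d\xi)+\lambda D_{KL}(\mu\|\Phi_x)\}$, infimum over probability measures $\mu$ on $\mathbb R$ with $\mu\ll\Phi_x$, where $D_{KL}(\mu\|\Phi_x)=\int\frac{d\mu}{d\Phi_x}\log\frac{d\mu}{d\Phi_x}\,d\Phi_x$. $\mathscr F$ is the set of $\phi:\mathbb R\to\mathbb R$ with $\inf_x\phi(x)\in\mathbb R$ and $\sup_x|\phi(x)|/(1+|x|^\beta)<\infty$ for some $\beta\ge0$. *)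

theory Defs
  imports "HOL-Probability.Probability"
begin

text \<open>Extended-real integral of a real function: positive part minus negative part
  (used only for integrands bounded below, so the negative part is finite and the
  value lies in (-infinity, +infinity]).\<close>
definition eint :: "real measure \<Rightarrow> (real \<Rightarrow> real) \<Rightarrow> ereal" where
  "eint M g = enn2ereal (\<integral>\<^sup>+ t. ennreal (max (g t) 0) \<partial>M)
              - enn2ereal (\<integral>\<^sup>+ t. ennreal (max (- g t) 0) \<partial>M)"

definition Phi :: "real \<Rightarrow> real measure" where
  "Phi x = density lborel (normal_density (- x) 1)"

definition DKL :: "real measure \<Rightarrow> real measure \<Rightarrow> ereal" where
  "DKL mu nu = eint nu (\<lambda>t. enn2real (RN_deriv nu mu t) * ln (enn2real (RN_deriv nu mu t)))"

definition admissible :: "real \<Rightarrow> real measure set" where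
  "admissible x = {mu. prob_space mu \<and> sets mu = sets borel \<and> absolutely_continuous (Phi x) mu}"

definition Mop :: "(real \<Rightarrow> real) \<Rightarrow> real \<Rightarrow> (real \<Rightarrow> real) \<Rightarrow> real \<Rightarrow> ereal" where
  "Mop l lam phi x = (INF mu \<in> admissible x.
      eint mu (\<lambda>\<xi>. phi (x + \<xi>) + l \<xi>) + ereal lam * DKL mu (Phi x))"

text \<open>The class script-F (Borel measurability made explicit, needed for the integrals).\<close>
definition FF :: "(real \<Rightarrow> real) set" where
  "FF = {phi. phi \<in> borel_measurable borel \<and> bdd_below (range phi) \<and>
          (\<exists>\<beta>\<ge>0. bdd_above (range (\<lambda>x. \<bar>phi x\<bar> / (1 + \<bar>x\<bar> powr \<beta>))))}"

definition Linf :: "(real \<Rightarrow> real) \<Rightarrow> ereal" where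
  "Linf g = esssup lborel (\<lambda>x. ereal \<bar>g x\<bar>)"

end

theory Submission
  imports Defs
begin


lemma eint_mono_AE:
  assumes "AE t in M. f t \<le> g t"
  shows "eint M f \<le> eint M g"
proof -
  have p: "(\<integral>\<^sup>+ t. ennreal (max (f t) 0) \<partial>M) \<le> (\<integral>\<^sup>+ t. ennreal (max (g t) 0) \<partial>M)"
    by (intro nn_integral_mono_AE) (use assms in \<open>auto elim!: eventually_mono intro: ennreal_leI\<close>)
  have n: "(\<integral>\<^sup>+ t. ennreal (max (- g t) 0) \<partial>M) \<le> (\<integral>\<^sup>+ t. ennreal (max (- f t) 0) \<partial>M)"
    by (intro nn_integral_mono_AE) (use assms in \<open>auto elim!: eventually_mono intro: ennreal_leI\<close>)
  show ?thesis unfolding eint_def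
    by (intro ereal_minus_mono) (use p n in \<open>simp_all add: less_eq_ennreal.rep_eq\<close>)
qed

lemma eint_lower:
  assumes "prob_space M" "\<And>t. t \<in> space M \<Longrightarrow> c \<le> f t"
  shows "ereal (min c 0) \<le> eint M f"
proof -
  interpret prob_space M by fact
  have n: "(\<integral>\<^sup>+ t. ennreal (max (- f t) 0) \<partial>M) \<le> (\<integral>\<^sup>+ t. ennreal (max (- c) 0) \<partial>M)"
    by (intro nn_integral_mono) (use assms in \<open>auto intro: ennreal_leI\<close>)
  also have "\<dots> = ennreal (max (- c) 0)" by (simp add: emeasure_space_1)
  finally have n0: "enn2ereal (\<integral>\<^sup>+ t. ennreal (max (- f t) 0) \<partial>M) \<le> enn2ereal (ennreal (max (- c) 0))"
    by (simp only: less_eq_ennreal.rep_eq)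
  have e: "enn2ereal (ennreal (max (-c) 0)) = ereal (max (-c) 0)" by (rule enn2ereal_ennreal) simp
  have n': "enn2ereal (\<integral>\<^sup>+ t. ennreal (max (- f t) 0) \<partial>M) \<le> ereal (max (-c) 0)"
    using n0 unfolding e .
  have "ereal (min c 0) = ereal 0 - ereal (max (-c) 0)" by (simp add: min_def max_def)
  also have "\<dots> \<le> eint M f" unfolding eint_def
    by (intro ereal_minus_mono n') (simp add: zero_ereal_def[symmetric])
  finally show ?thesis .
qed

lemma eint_distr:
  assumes [measurable]: "f \<in> borel_measurable N" "T \<in> measurable M N"
  shows "eint (distr M N T) f = eint M (\<lambda>x. f (T x))"
  unfolding eint_def by (simp add: nn_integral_distr)

lemma eint_repr:
  assumes "prob_space M" and fm[measurable]: "f \<in> borel_measurable M" and fc: "\<And>t. t \<in> space M \<Longrightarrow> c \<le> f t"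
  shows "eint M f = enn2ereal (\<integral>\<^sup>+ t. ennreal (f t - c) \<partial>M) + ereal c"
proof -
  interpret prob_space M by fact
  define c' where "c' = min c 0"
  define P where "P = (\<integral>\<^sup>+ t. ennreal (max (f t) 0) \<partial>M)"
  define N where "N = (\<integral>\<^sup>+ t. ennreal (max (- f t) 0) \<partial>M)"
  define Q where "Q = (\<integral>\<^sup>+ t. ennreal (f t - c) \<partial>M)"
  define W where "W = (\<integral>\<^sup>+ t. ennreal (- c' - max (- f t) 0) \<partial>M)"
  have "Q + ennreal (c - c') = (\<integral>\<^sup>+ t. (ennreal (f t - c) + ennreal (c - c')) \<partial>M)"
    unfolding Q_def by (subst nn_integral_add) (auto simp: emeasure_space_1)
  also have "\<dots> = (\<integral>\<^sup>+ t. (ennreal (max (f t) 0) + ennreal (- c' - max (- f t) 0)) \<partial>M)"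
  proof (intro nn_integral_cong)
    fix t assume t: "t \<in> space M"
    have "c \<le> f t" using fc[OF t] .
    then show "ennreal (f t - c) + ennreal (c - c') = ennreal (max (f t) 0) + ennreal (- c' - max (- f t) 0)"
    proof -
      assume ct: "c \<le> f t"
      have a: "ennreal (f t - c) + ennreal (c - c') = ennreal ((f t - c) + (c - c'))"
        by (rule ennreal_plus[symmetric]) (use ct in \<open>auto simp: c'_def\<close>)
      have b: "ennreal (max (f t) 0) + ennreal (- c' - max (- f t) 0) = ennreal (max (f t) 0 + (- c' - max (- f t) 0))"
        by (rule ennreal_plus[symmetric]) (use ct in \<open>auto simp: c'_def\<close>)
      show ?thesis unfolding a b by (rule arg_cong[where f=ennreal]) (auto simp: max_def)
    qed
  qed
  also have "\<dots> = P + W" unfolding P_def W_def by (subst nn_integral_add) auto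
  finally have 1: "Q + ennreal (c - c') = P + W" .
  have "W + N = (\<integral>\<^sup>+ t. (ennreal (- c' - max (- f t) 0) + ennreal (max (- f t) 0)) \<partial>M)"
    unfolding W_def N_def by (subst nn_integral_add) auto
  also have "\<dots> = (\<integral>\<^sup>+ t. ennreal (- c') \<partial>M)"
  proof (intro nn_integral_cong)
    fix t assume t: "t \<in> space M"
    have "c \<le> f t" using fc[OF t] .
    then show "ennreal (- c' - max (- f t) 0) + ennreal (max (- f t) 0) = ennreal (- c')"
      unfolding c'_def by (subst ennreal_plus[symmetric]) (auto simp: max_def min_def intro!: arg_cong[where f=ennreal])
  qed
  also have "\<dots> = ennreal (- c')" by (simp add: emeasure_space_1)
  finally have 2: "W + N = ennreal (- c')" .
  have cc0: "c' \<le> 0" "c' \<le> c" unfolding c'_def by auto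
  have e1: "enn2ereal Q + ereal (c - c') = enn2ereal P + enn2ereal W"
    using arg_cong[OF 1, of enn2ereal] cc0 by (simp add: plus_ennreal.rep_eq)
  have e2: "enn2ereal W + enn2ereal N = ereal (- c')"
    using arg_cong[OF 2, of enn2ereal] cc0 by (simp add: plus_ennreal.rep_eq)
  have Wf: "enn2ereal W = ereal (real_of_ereal (enn2ereal W))" "enn2ereal N = ereal (real_of_ereal (enn2ereal N))"
    using e2 by (cases "enn2ereal W"; cases "enn2ereal N"; simp)+
  have "eint M f = enn2ereal P - enn2ereal N" unfolding eint_def P_def N_def ..
  also have "\<dots> = enn2ereal Q + ereal c"
  proof -
    have Pn: "enn2ereal P \<noteq> -\<infinity>" "enn2ereal Q \<noteq> -\<infinity>" using enn2ereal_nonneg[of P] enn2ereal_nonneg[of Q] by auto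
    show ?thesis using e1 e2 Wf Pn
      by (cases "enn2ereal P"; cases "enn2ereal Q"; cases "enn2ereal W"; cases "enn2ereal N"; simp)
  qed
  finally show ?thesis unfolding Q_def .
qed

lemma eint_shift:
  assumes "prob_space M" and fm[measurable]: "f \<in> borel_measurable M" and fc: "\<And>t. t \<in> space M \<Longrightarrow> c \<le> f t"
  shows "eint M (\<lambda>t. f t + a) = eint M f + ereal a"
proof -
  have "eint M (\<lambda>t. f t + a) = enn2ereal (\<integral>\<^sup>+ t. ennreal (f t + a - (c + a)) \<partial>M) + ereal (c + a)"
    by (rule eint_repr[OF assms(1)]) (use fc in auto)
  also have "\<dots> = (enn2ereal (\<integral>\<^sup>+ t. ennreal (f t - c) \<partial>M) + ereal c) + ereal a"
    by (simp add: add.assoc)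
  also have "\<dots> = eint M f + ereal a"
    by (subst eint_repr[OF assms(1) fm fc]) auto
  finally show ?thesis .
qed

lemma eint_comb:
  assumes "prob_space M" and fm[measurable]: "f \<in> borel_measurable M" and fc: "\<And>t. t \<in> space M \<Longrightarrow> c \<le> f t"
    and gm[measurable]: "g \<in> borel_measurable M" and gc: "\<And>t. t \<in> space M \<Longrightarrow> d \<le> g t"
    and eta: "0 \<le> \<eta>" "\<eta> \<le> 1"
  shows "eint M (\<lambda>t. \<eta> * f t + (1 - \<eta>) * g t) = ereal \<eta> * eint M f + ereal (1 - \<eta>) * eint M g"
proof -
  define A where "A = (\<integral>\<^sup>+ t. ennreal (f t - c) \<partial>M)"
  define B where "B = (\<integral>\<^sup>+ t. ennreal (g t - d) \<partial>M)"
  have "eint M (\<lambda>t. \<eta> * f t + (1 - \<eta>) * g t) =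
     enn2ereal (\<integral>\<^sup>+ t. ennreal (\<eta> * f t + (1 - \<eta>) * g t - (\<eta> * c + (1 - \<eta>) * d)) \<partial>M) + ereal (\<eta> * c + (1 - \<eta>) * d)"
  proof (rule eint_repr[OF assms(1)])
    fix t assume t: "t \<in> space M"
    show "\<eta> * c + (1 - \<eta>) * d \<le> \<eta> * f t + (1 - \<eta>) * g t"
      using fc[OF t] gc[OF t] eta by (intro add_mono mult_left_mono) auto
  qed simp
  also have "(\<integral>\<^sup>+ t. ennreal (\<eta> * f t + (1 - \<eta>) * g t - (\<eta> * c + (1 - \<eta>) * d)) \<partial>M)
      = (\<integral>\<^sup>+ t. (ennreal \<eta> * ennreal (f t - c) + ennreal (1 - \<eta>) * ennreal (g t - d)) \<partial>M)"
  proof (intro nn_integral_cong)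
    fix t assume t: "t \<in> space M"
    have x: "0 \<le> f t - c" "0 \<le> g t - d" using fc[OF t] gc[OF t] by auto
    have "ennreal \<eta> * ennreal (f t - c) + ennreal (1 - \<eta>) * ennreal (g t - d)
       = ennreal (\<eta> * (f t - c)) + ennreal ((1 - \<eta>) * (g t - d))"
      using x eta by (simp add: ennreal_mult)
    also have "\<dots> = ennreal (\<eta> * (f t - c) + (1 - \<eta>) * (g t - d))"
      using x eta by (intro ennreal_plus[symmetric]) auto
    finally show "ennreal (\<eta> * f t + (1 - \<eta>) * g t - (\<eta> * c + (1 - \<eta>) * d)) = ennreal \<eta> * ennreal (f t - c) + ennreal (1 - \<eta>) * ennreal (g t - d)"
      by (simp add: algebra_simps)
  qed
  also have "\<dots> = ennreal \<eta> * A + ennreal (1 - \<eta>) * B"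
    unfolding A_def B_def by (simp add: nn_integral_add nn_integral_cmult)
  finally have 1: "eint M (\<lambda>t. \<eta> * f t + (1 - \<eta>) * g t) = enn2ereal (ennreal \<eta> * A + ennreal (1 - \<eta>) * B) + ereal (\<eta> * c + (1 - \<eta>) * d)" .
  have 2: "enn2ereal (ennreal \<eta> * A + ennreal (1 - \<eta>) * B) = ereal \<eta> * enn2ereal A + ereal (1 - \<eta>) * enn2ereal B"
    using eta by (simp add: plus_ennreal.rep_eq times_ennreal.rep_eq)
  have ef: "eint M f = enn2ereal A + ereal c" unfolding A_def by (rule eint_repr[OF assms(1) fm fc])
  have eg: "eint M g = enn2ereal B + ereal d" unfolding B_def by (rule eint_repr[OF assms(1) gm gc])
  have An: "enn2ereal A \<noteq> -\<infinity>" "enn2ereal B \<noteq> -\<infinity>" using enn2ereal_nonneg[of A] enn2ereal_nonneg[of B] by auto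
  show ?thesis unfolding 1 2 ef eg using An eta
    by (cases "enn2ereal A"; cases "enn2ereal B"; cases "\<eta> = 0"; cases "\<eta> = 1"; simp add: algebra_simps)
qed



lemma Phi_prob: "prob_space (Phi x)"
  unfolding Phi_def by (rule prob_space_normal_density) simp

lemma sets_Phi[simp, measurable_cong]: "sets (Phi x) = sets borel"
  unfolding Phi_def by simp

lemma space_Phi[simp]: "space (Phi x) = UNIV"
  unfolding Phi_def by simp

lemma null_sets_Phi: "null_sets (Phi x) = null_sets lborel"
proof (intro set_eqI)
  fix A
  have "A \<in> null_sets (Phi x) \<longleftrightarrow> A \<in> sets lborel \<and> (AE t in lborel. t \<in> A \<longrightarrow> ennreal (normal_density (-x) 1 t) = 0)"
    unfolding Phi_def by (rule null_sets_density_iff) simp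
  also have "\<dots> \<longleftrightarrow> A \<in> sets lborel \<and> (AE t in lborel. t \<notin> A)"
  proof -
    have p: "\<And>t. 0 < normal_density (-x) 1 t" by (rule normal_density_pos) simp
    have "\<And>t. ennreal (normal_density (-x) 1 t) \<noteq> 0" using p by (metis ennreal_eq_0_iff not_le)
    then show ?thesis by simp
  qed
  also have "\<dots> \<longleftrightarrow> A \<in> null_sets lborel"
  proof
    assume "A \<in> sets lborel \<and> (AE t in lborel. t \<notin> A)"
    then show "A \<in> null_sets lborel" using AE_iff_null_sets[of A lborel] by blast
  next
    assume "A \<in> null_sets lborel"
    then show "A \<in> sets lborel \<and> (AE t in lborel. t \<notin> A)"
      using AE_iff_null_sets[of A lborel] null_setsD2[of A lborel] by blast
  qed
  finally show "A \<in> null_sets (Phi x) \<longleftrightarrow> A \<in> null_sets lborel" .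
qed

lemma admissible_iff: "mu \<in> admissible x \<longleftrightarrow> prob_space mu \<and> sets mu = sets borel \<and> null_sets lborel \<subseteq> null_sets mu"
  unfolding admissible_def absolutely_continuous_def null_sets_Phi by simp

lemma Phi_shift: "Phi (x + h) = distr (Phi x) borel ((+) (-h))"
proof -
  have "Phi (x + h) = density (distr lborel borel ((+) (-h))) (\<lambda>t. ennreal (normal_density (- (x + h)) 1 t))"
    unfolding Phi_def lborel_distr_plus ..
  also have "\<dots> = distr (density lborel (\<lambda>t. ennreal (normal_density (- (x + h)) 1 (-h + t)))) borel ((+) (-h))"
    by (rule density_distr) auto
  also have "(\<lambda>t. ennreal (normal_density (- (x + h)) 1 (-h + t))) = (\<lambda>t. ennreal (normal_density (- x) 1 t))"
    by (rule ext) (simp add: normal_density_def)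
  finally show ?thesis unfolding Phi_def .
qed

lemma null_shift: "A \<in> null_sets lborel \<Longrightarrow> (+) c -` A \<in> null_sets lborel"
proof -
  assume A: "A \<in> null_sets lborel"
  have "emeasure (distr lborel borel ((+) c)) A = 0" using A unfolding lborel_distr_plus by auto
  then have "emeasure lborel ((+) c -` A) = 0"
    using A by (subst (asm) emeasure_distr) auto
  moreover have "(+) c -` A \<inter> space lborel \<in> sets lborel"
    by (rule measurable_sets[of _ lborel lborel]) (use A in auto)
  ultimately show ?thesis by auto
qed

lemma distr_adm:
  assumes "mu \<in> admissible x"
  shows "distr mu borel ((+) c) \<in> admissible y"
proof -
  have pm: "prob_space mu" and sm: "sets mu = sets borel" and ac: "null_sets lborel \<subseteq> null_sets mu"
    using assms unfolding admissible_iff by auto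
  have meas: "(+) c \<in> measurable mu borel" by (subst measurable_cong_sets[OF sm refl]) simp
  have "prob_space (distr mu borel ((+) c))" by (rule prob_space.prob_space_distr[OF pm meas])
  moreover have "null_sets lborel \<subseteq> null_sets (distr mu borel ((+) c))"
  proof
    fix A :: "real set" assume A: "A \<in> null_sets lborel"
    have "(+) c -` A \<in> null_sets mu" using null_shift[OF A] ac by auto
    moreover have "space mu = UNIV" using sets_eq_imp_space_eq[OF sm] by simp
    ultimately have e: "emeasure mu ((+) c -` A \<inter> space mu) = 0" by auto
    have As: "A \<in> sets borel" using null_setsD2[OF A] by simp
    have "emeasure (distr mu borel ((+) c)) A = 0"
      by (subst emeasure_distr[OF meas As]) (rule e)
    then show "A \<in> null_sets (distr mu borel ((+) c))" using As by (intro null_setsI) auto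
  qed
  ultimately show ?thesis unfolding admissible_iff by simp
qed


lemma xlnx_ge: "0 \<le> (r::real) \<Longrightarrow> -1 \<le> r * ln r"
proof (cases "r = 0")
  case False
  assume r: "0 \<le> r"
  then have rp: "0 < r" using False by simp
  have "ln (1/r) \<le> 1/r - 1" using rp by (intro ln_le_minus_one) simp
  then have "- ln r \<le> 1/r - 1" using rp by (simp add: ln_div)
  then have "r * (- ln r) \<le> r * (1/r - 1)" using rp by (intro mult_left_mono) auto
  moreover have "r * (1/r - 1) = 1 - r" using rp by (simp add: field_simps)
  ultimately show ?thesis using rp by (simp add: algebra_simps)
qed simp

lemma DKL_lower: "ereal (-1) \<le> DKL mu (Phi x)"
proof -
  have "ereal (min (-1) 0) \<le> DKL mu (Phi x)" unfolding DKL_def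
    by (rule eint_lower[OF Phi_prob]) (simp add: xlnx_ge)
  then show ?thesis by simp
qed

lemma eint_zero: "eint M (\<lambda>_. 0) = 0"
  unfolding eint_def by simp

lemma DKL_self: "DKL (Phi x) (Phi x) \<le> 0"
proof -
  interpret prob_space "Phi x" by (rule Phi_prob)
  have "AE t in Phi x. 1 = RN_deriv (Phi x) (Phi x) t"
    by (rule RN_deriv_unique) (auto simp: density_1)
  then have "AE t in Phi x. enn2real (RN_deriv (Phi x) (Phi x) t) * ln (enn2real (RN_deriv (Phi x) (Phi x) t)) \<le> 0"
    by (auto elim!: eventually_mono dest: sym)
  then have "DKL (Phi x) (Phi x) \<le> eint (Phi x) (\<lambda>_. 0)" unfolding DKL_def
    by (rule eint_mono_AE)
  then show ?thesis by (simp add: eint_zero)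
qed

lemma DKL_distr:
  assumes mu: "mu \<in> admissible x"
  shows "DKL (distr mu borel ((+) c)) (distr (Phi x) borel ((+) c)) = DKL mu (Phi x)"
proof -
  interpret prob_space "Phi x" by (rule Phi_prob)
  have sm: "sets mu = sets (Phi x)" using mu unfolding admissible_iff by simp
  have PD: "distr (Phi x) borel ((+) c) = Phi (x - c)"
    using Phi_shift[of x "-c"] by simp
  have ac: "absolutely_continuous (distr (Phi x) borel ((+) c)) (distr mu borel ((+) c))"
    using distr_adm[OF mu, of c "x - c"] unfolding PD admissible_def by simp
  have "AE t in Phi x. RN_deriv (distr (Phi x) borel ((+) c)) (distr mu borel ((+) c)) (c + t) = RN_deriv (Phi x) mu t"
    by (rule RN_deriv_distr[where T'="(+) (-c)"]) (use ac sm in auto)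
  then have AE: "AE t in Phi x. (\<lambda>t. enn2real (RN_deriv (distr (Phi x) borel ((+) c)) (distr mu borel ((+) c)) t) * ln (enn2real (RN_deriv (distr (Phi x) borel ((+) c)) (distr mu borel ((+) c)) t))) (c + t)
      = enn2real (RN_deriv (Phi x) mu t) * ln (enn2real (RN_deriv (Phi x) mu t))"
    by (auto elim!: eventually_mono)
  have meas: "(\<lambda>t. enn2real (RN_deriv (distr (Phi x) borel ((+) c)) (distr mu borel ((+) c)) t) * ln (enn2real (RN_deriv (distr (Phi x) borel ((+) c)) (distr mu borel ((+) c)) t))) \<in> borel_measurable borel"
  proof -
    have "RN_deriv (distr (Phi x) borel ((+) c)) (distr mu borel ((+) c)) \<in> borel_measurable (distr (Phi x) borel ((+) c))"
      by (rule borel_measurable_RN_deriv)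
    then have "RN_deriv (distr (Phi x) borel ((+) c)) (distr mu borel ((+) c)) \<in> borel_measurable borel"
      by (subst (asm) measurable_cong_sets[of _ borel]) auto
    then show ?thesis by measurable
  qed
  have "DKL (distr mu borel ((+) c)) (distr (Phi x) borel ((+) c))
      = eint (Phi x) (\<lambda>t. (\<lambda>t. enn2real (RN_deriv (distr (Phi x) borel ((+) c)) (distr mu borel ((+) c)) t) * ln (enn2real (RN_deriv (distr (Phi x) borel ((+) c)) (distr mu borel ((+) c)) t))) (c + t))"
    unfolding DKL_def by (rule eint_distr[OF meas]) simp
  also have "\<dots> = DKL mu (Phi x)" unfolding DKL_def
    by (rule antisym; rule eint_mono_AE) (use AE in \<open>auto elim!: eventually_mono\<close>)
  finally show ?thesis .
qed



lemma powr_poly: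
  fixes y \<beta> :: real
  assumes "0 \<le> \<beta>"
  shows "\<bar>y\<bar> powr \<beta> \<le> 1 + y ^ (2 * nat \<lceil>\<beta>\<rceil>)"
proof (cases "\<bar>y\<bar> \<le> 1")
  case True
  then have "\<bar>y\<bar> powr \<beta> \<le> 1" using assms powr_le1[of \<beta> "\<bar>y\<bar>"] by simp
  moreover have "0 \<le> y ^ (2 * nat \<lceil>\<beta>\<rceil>)" by (simp add: power_mult)
  ultimately show ?thesis by linarith
next
  case False
  have b: "\<beta> \<le> real (2 * nat \<lceil>\<beta>\<rceil>)" using assms by linarith
  have "\<bar>y\<bar> powr \<beta> \<le> \<bar>y\<bar> powr real (2 * nat \<lceil>\<beta>\<rceil>)"
    using False b by (intro powr_mono) auto
  also have "\<dots> = \<bar>y\<bar> ^ (2 * nat \<lceil>\<beta>\<rceil>)" using False by (subst powr_realpow) auto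
  also have "\<dots> = y ^ (2 * nat \<lceil>\<beta>\<rceil>)" by (simp add: power_mult)
  finally show ?thesis by simp
qed

lemma lin_aux: "2 * (a::real) \<le> s + 1 \<Longrightarrow> 0 \<le> s \<Longrightarrow> a \<le> 1 + s"
  by linarith

lemma FF_props:
  assumes "phi \<in> FF"
  obtains b B n where "phi \<in> borel_measurable borel" "\<And>y. b \<le> phi y"
    "\<And>y. \<bar>phi y\<bar> \<le> B * (1 + (1 + y ^ (2 * n)))" "0 \<le> B"
proof -
  from assms obtain \<beta> where m: "phi \<in> borel_measurable borel" and bb: "bdd_below (range phi)"
    and \<beta>: "\<beta> \<ge> 0" and ba: "bdd_above (range (\<lambda>x. \<bar>phi x\<bar> / (1 + \<bar>x\<bar> powr \<beta>)))"
    unfolding FF_def by auto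
  from bb obtain b where b: "\<And>y. b \<le> phi y" unfolding bdd_below_def by auto
  from ba obtain B where B: "\<And>y. \<bar>phi y\<bar> / (1 + \<bar>y\<bar> powr \<beta>) \<le> B" unfolding bdd_above_def by auto
  have B0: "0 \<le> B" using B[of 0] order_trans[OF _ B[of 0]] by (metis abs_ge_zero divide_nonneg_nonneg add_nonneg_nonneg zero_le_one powr_ge_zero)
  have "\<bar>phi y\<bar> \<le> B * (1 + (1 + y ^ (2 * nat \<lceil>\<beta>\<rceil>)))" for y
  proof -
    have d: "0 < 1 + \<bar>y\<bar> powr \<beta>" by (simp add: add_pos_nonneg)
    have "\<bar>phi y\<bar> \<le> B * (1 + \<bar>y\<bar> powr \<beta>)" using B[of y] d by (simp add: divide_le_eq mult.commute)
    also have "\<dots> \<le> B * (1 + (1 + y ^ (2 * nat \<lceil>\<beta>\<rceil>)))"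
      using powr_poly[OF \<beta>, of y] B0 by (intro mult_left_mono) auto
    finally show ?thesis .
  qed
  then show ?thesis using that m b B0 by blast
qed



lemma comb_ineq:
  fixes M1 M2 E1 E2 D :: ereal and \<eta> :: real
  assumes eta: "0 \<le> \<eta>" "\<eta> \<le> 1"
    and f1: "\<bar>M1\<bar> \<noteq> \<infinity>" and f2: "\<bar>M2\<bar> \<noteq> \<infinity>"
    and h1: "M1 \<le> E1 + D" and h2: "M2 \<le> E2 + D"
    and n: "E1 \<noteq> -\<infinity>" "E2 \<noteq> -\<infinity>" "D \<noteq> -\<infinity>"
  shows "ereal \<eta> * M1 + ereal (1 - \<eta>) * M2 \<le> (ereal \<eta> * E1 + ereal (1 - \<eta>) * E2) + D"
proof (cases "D = \<infinity>")
  case True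
  have "ereal \<eta> * E1 + ereal (1 - \<eta>) * E2 \<noteq> -\<infinity>" using n eta
    by (cases E1; cases E2; cases "\<eta> = 0"; cases "\<eta> = 1"; simp)
  then show ?thesis using True by simp
next
  case False
  then obtain d where d: "D = ereal d" using n(3) by (cases D) auto
  obtain m1 m2 where m: "M1 = ereal m1" "M2 = ereal m2" using f1 f2 by (cases M1; cases M2) auto
  show ?thesis
  proof (cases E1)
    case (real e1)
    show ?thesis
    proof (cases E2)
      case (real e2)
      have "\<eta> * m1 \<le> \<eta> * (e1 + d)" using h1 eta m d \<open>E1 = ereal e1\<close> by (intro mult_left_mono) auto
      moreover have "(1 - \<eta>) * m2 \<le> (1 - \<eta>) * (e2 + d)" using h2 eta m d real by (intro mult_left_mono) auto
      ultimately show ?thesis using m d \<open>E1 = ereal e1\<close> real by (simp add: algebra_simps)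
    next
      case PInf
      then show ?thesis using m d \<open>E1 = ereal e1\<close> h1 eta
        by (cases "\<eta> = 1") (auto simp: ereal_mult_left_mono)
    qed (use n in auto)
  next
    case PInf
    show ?thesis
    proof (cases "\<eta> = 0")
      case True
      then show ?thesis using h2 m d PInf n by (cases E2) auto
    next
      case False
      then have "ereal \<eta> * E1 = \<infinity>" using PInf eta by simp
      moreover have "ereal (1 - \<eta>) * E2 \<noteq> -\<infinity>" using n eta by (cases E2; cases "\<eta> = 1"; simp)
      ultimately have "(ereal \<eta> * E1 + ereal (1 - \<eta>) * E2) + D = \<infinity>" by simp
      then show ?thesis by (simp only:) simp
    qed
  qed (use n in auto)
qed

context
  fixes l :: "real \<Rightarrow> real" and K Ll lam :: real
  assumes K_pos: "K > 0"
    and l0: "l 0 = K" and l_min: "\<And>x. l 0 \<le> l x"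
    and Ll_pos: "Ll > 0" and l_lip: "Ll-lipschitz_on UNIV l"
    and lam_pos: "lam > 0"
begin

lemma l_meas[measurable]: "l \<in> borel_measurable borel"
  by (rule borel_measurable_continuous_onI) (rule lipschitz_on_continuous_on[OF l_lip])

lemma l_shift: "l (a + t) \<le> l t + Ll * \<bar>a\<bar>"
  using lipschitz_onD[OF l_lip, of "a + t" t] by (simp add: dist_real_def)

lemma l_bound: "l t \<le> K + Ll * \<bar>t\<bar>"
  using l_shift[of t 0] l0 by simp

lemma Phi_term_fin:
  assumes "phi \<in> FF"
  shows "eint (Phi x) (\<lambda>\<xi>. phi (x + \<xi>) + l \<xi>) < \<infinity>"
proof -
  obtain b B n where m[measurable]: "phi \<in> borel_measurable borel" and b: "\<And>y. b \<le> phi y"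
    and B: "\<And>y. \<bar>phi y\<bar> \<le> B * (1 + (1 + y ^ (2 * n)))" and B0: "0 \<le> B"
    using FF_props[OF assms] by blast
  define a0 where "a0 = 2 * B + K + Ll * (\<bar>x\<bar> + 1)"
  define h where "h = (\<lambda>\<xi>::real. a0 + Ll * (\<xi> + x)^2 + B * (\<xi> + x) ^ (2 * n))"
  have a00: "0 \<le> a0" unfolding a0_def using B0 K_pos Ll_pos by auto
  have h0: "0 \<le> h \<xi>" for \<xi> unfolding h_def using a00 B0 Ll_pos by (auto simp: power_mult intro!: add_nonneg_nonneg mult_nonneg_nonneg)
  have gh: "max (phi (x + \<xi>) + l \<xi>) 0 \<le> h \<xi>" for \<xi>
  proof -
    have 1: "phi (x + \<xi>) \<le> B * (1 + (1 + (\<xi> + x) ^ (2 * n)))" using B[of "x + \<xi>"] by (simp add: add.commute)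
    have sq: "\<bar>\<xi> + x\<bar> \<le> 1 + (\<xi> + x)^2"
    proof -
      have "0 \<le> (\<bar>\<xi> + x\<bar> - 1)^2" by simp
      then have "2 * \<bar>\<xi> + x\<bar> \<le> \<bar>\<xi> + x\<bar>^2 + 1" by (simp add: power2_eq_square algebra_simps)
      moreover have "0 \<le> (\<xi> + x)^2" by simp
      ultimately show ?thesis using lin_aux by (simp only: power2_abs)
    qed
    have "\<bar>\<xi>\<bar> \<le> \<bar>x\<bar> + \<bar>\<xi> + x\<bar>" by linarith
    then have "\<bar>\<xi>\<bar> \<le> \<bar>x\<bar> + 1 + (\<xi> + x)^2" using sq by linarith
    then have 2: "l \<xi> \<le> K + Ll * (\<bar>x\<bar> + 1) + Ll * (\<xi> + x)^2"
      using l_bound[of \<xi>] Ll_pos by (smt (verit) mult_left_mono distrib_left)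
    show ?thesis using 1 2 h0[of \<xi>] unfolding h_def a0_def by (simp add: algebra_simps)
  qed
  have int: "integrable lborel (\<lambda>\<xi>. normal_density (-x) 1 \<xi> * h \<xi>)"
  proof -
    have i: "integrable lborel (\<lambda>\<xi>. normal_density (-x) 1 \<xi> * (\<xi> - - x) ^ k)" for k
      by (rule integrable_normal_moment) simp
    have "integrable lborel (\<lambda>\<xi>. a0 * (normal_density (-x) 1 \<xi> * (\<xi> - - x) ^ 0) + Ll * (normal_density (-x) 1 \<xi> * (\<xi> - - x) ^ 2)
       + B * (normal_density (-x) 1 \<xi> * (\<xi> - - x) ^ (2 * n)))"
      by (intro Bochner_Integration.integrable_add; rule Bochner_Integration.integrable_mult_right; rule i)
    then show ?thesis unfolding h_def by (simp add: algebra_simps)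
  qed
  have "(\<integral>\<^sup>+ \<xi>. ennreal (max (phi (x + \<xi>) + l \<xi>) 0) \<partial>Phi x) \<le> (\<integral>\<^sup>+ \<xi>. ennreal (h \<xi>) \<partial>Phi x)"
    by (intro nn_integral_mono ennreal_leI gh)
  also have "\<dots> = (\<integral>\<^sup>+ \<xi>. ennreal (normal_density (-x) 1 \<xi>) * ennreal (h \<xi>) \<partial>lborel)"
    unfolding Phi_def by (subst nn_integral_density) (auto simp: h_def)
  also have "\<dots> = (\<integral>\<^sup>+ \<xi>. ennreal (normal_density (-x) 1 \<xi> * h \<xi>) \<partial>lborel)"
    using h0 by (simp add: ennreal_mult)
  also have "\<dots> = ennreal (\<integral> \<xi>. normal_density (-x) 1 \<xi> * h \<xi> \<partial>lborel)"
    using int h0 by (intro nn_integral_eq_integral) auto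
  also have "\<dots> < \<infinity>" by simp
  finally have fin: "(\<integral>\<^sup>+ \<xi>. ennreal (max (phi (x + \<xi>) + l \<xi>) 0) \<partial>Phi x) < \<infinity>" .
  have "eint (Phi x) (\<lambda>\<xi>. phi (x + \<xi>) + l \<xi>) \<le> enn2ereal (\<integral>\<^sup>+ \<xi>. ennreal (max (phi (x + \<xi>) + l \<xi>) 0) \<partial>Phi x)"
    unfolding eint_def by (rule ereal_diff_le_self) simp
  also have "\<dots> < \<infinity>" using fin by (simp add: less_top[symmetric])
  finally show ?thesis .
qed


lemma G_meas:
  assumes "sets M = sets borel" and [measurable]: "phi \<in> borel_measurable borel"
  shows "(\<lambda>\<xi>. phi (a + \<xi>) + l \<xi>) \<in> borel_measurable M"
  by (subst measurable_cong_sets[OF assms(1) refl]) measurable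

lemma l_ge: "K \<le> l t" using l_min[of t] l0 by simp

lemma term_lower:
  assumes phi: "phi \<in> FF" and b: "\<And>y. b \<le> phi y" and mu: "mu \<in> admissible x"
  shows "ereal (min (b + K) 0 - lam) \<le> eint mu (\<lambda>\<xi>. phi (x + \<xi>) + l \<xi>) + ereal lam * DKL mu (Phi x)"
proof -
  have pm: "prob_space mu" using mu unfolding admissible_iff by simp
  have 1: "ereal (min (b + K) 0) \<le> eint mu (\<lambda>\<xi>. phi (x + \<xi>) + l \<xi>)"
    by (rule eint_lower[OF pm]) (use b l_ge in \<open>simp add: add_mono\<close>)
  have "ereal lam * ereal (-1) \<le> ereal lam * DKL mu (Phi x)"
    by (rule ereal_mult_left_mono[OF DKL_lower]) (use lam_pos in simp)
  then have 2: "ereal (- lam) \<le> ereal lam * DKL mu (Phi x)" by simp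
  have "ereal (min (b + K) 0 - lam) = ereal (min (b + K) 0) + ereal (- lam)" unfolding plus_ereal.simps(1) by simp
  also have "\<dots> \<le> eint mu (\<lambda>\<xi>. phi (x + \<xi>) + l \<xi>) + ereal lam * DKL mu (Phi x)"
    by (rule add_mono[OF 1 2])
  finally show ?thesis .
qed

lemma Phi_adm: "Phi x \<in> admissible x"
  unfolding admissible_def absolutely_continuous_def using Phi_prob by simp

lemma Mop_fin:
  assumes phi: "phi \<in> FF"
  shows "Mop l lam phi x \<noteq> \<infinity> \<and> Mop l lam phi x \<noteq> -\<infinity>"
proof -
  obtain b where b: "\<And>y. b \<le> phi y" using FF_props[OF phi] by metis
  have "ereal (min (b + K) 0 - lam) \<le> Mop l lam phi x"
    unfolding Mop_def by (rule INF_greatest) (rule term_lower[OF phi b])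
  then have 1: "Mop l lam phi x \<noteq> -\<infinity>" by auto
  have "Mop l lam phi x \<le> eint (Phi x) (\<lambda>\<xi>. phi (x + \<xi>) + l \<xi>) + ereal lam * DKL (Phi x) (Phi x)"
    unfolding Mop_def by (rule INF_lower) (rule Phi_adm)
  also have "\<dots> \<le> eint (Phi x) (\<lambda>\<xi>. phi (x + \<xi>) + l \<xi>) + ereal lam * 0"
    by (intro add_left_mono ereal_mult_left_mono DKL_self) (use lam_pos in simp)
  also have "\<dots> < \<infinity>" using Phi_term_fin[OF phi, of x] by simp
  finally show ?thesis using 1 by auto
qed

lemma Mop_shift:
  assumes phi: "phi \<in> FF"
  shows "Mop l lam phi (x + h) \<le> Mop l lam phi x + ereal (Ll * \<bar>h\<bar>)"
proof -
  obtain b where m[measurable]: "phi \<in> borel_measurable borel" and b: "\<And>y. b \<le> phi y"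
    using FF_props[OF phi] by metis
  have "Mop l lam phi (x + h) - ereal (Ll * \<bar>h\<bar>) \<le> Mop l lam phi x"
    unfolding Mop_def[of l lam phi x]
  proof (rule INF_greatest)
    fix mu assume mu: "mu \<in> admissible x"
    have pm: "prob_space mu" and sm: "sets mu = sets borel" using mu unfolding admissible_iff by auto
    define mu' where "mu' = distr mu borel ((+) (-h))"
    have adm': "mu' \<in> admissible (x + h)" unfolding mu'_def by (rule distr_adm[OF mu])
    have T: "(+) (-h) \<in> measurable mu borel" by (subst measurable_cong_sets[OF sm refl]) simp
    have "eint mu' (\<lambda>\<xi>. phi (x + h + \<xi>) + l \<xi>) = eint mu (\<lambda>\<xi>. phi (x + h + (-h + \<xi>)) + l (-h + \<xi>))"
      unfolding mu'_def by (rule eint_distr[OF _ T]) measurable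
    also have "\<dots> \<le> eint mu (\<lambda>\<xi>. (phi (x + \<xi>) + l \<xi>) + Ll * \<bar>h\<bar>)"
      by (rule eint_mono_AE, rule AE_I2) (use l_shift[of "-h"] in \<open>simp add: add.assoc\<close>)
    also have "\<dots> = eint mu (\<lambda>\<xi>. phi (x + \<xi>) + l \<xi>) + ereal (Ll * \<bar>h\<bar>)"
      by (rule eint_shift[OF pm G_meas[OF sm m], where c="b + K"]) (use b l_ge in \<open>simp add: add_mono\<close>)
    finally have e1: "eint mu' (\<lambda>\<xi>. phi (x + h + \<xi>) + l \<xi>) \<le> eint mu (\<lambda>\<xi>. phi (x + \<xi>) + l \<xi>) + ereal (Ll * \<bar>h\<bar>)" .
    have e2: "DKL mu' (Phi (x + h)) = DKL mu (Phi x)"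
      unfolding mu'_def Phi_shift[of x h] by (rule DKL_distr[OF mu])
    have "Mop l lam phi (x + h) \<le> eint mu' (\<lambda>\<xi>. phi (x + h + \<xi>) + l \<xi>) + ereal lam * DKL mu' (Phi (x + h))"
      unfolding Mop_def by (rule INF_lower[OF adm'])
    also have "\<dots> \<le> (eint mu (\<lambda>\<xi>. phi (x + \<xi>) + l \<xi>) + ereal (Ll * \<bar>h\<bar>)) + ereal lam * DKL mu (Phi x)"
      unfolding e2 by (rule add_right_mono[OF e1])
    also have "\<dots> = (eint mu (\<lambda>\<xi>. phi (x + \<xi>) + l \<xi>) + ereal lam * DKL mu (Phi x)) + ereal (Ll * \<bar>h\<bar>)"
      by (simp add: ac_simps)
    finally show "Mop l lam phi (x + h) - ereal (Ll * \<bar>h\<bar>) \<le> eint mu (\<lambda>\<xi>. phi (x + \<xi>) + l \<xi>) + ereal lam * DKL mu (Phi x)"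
      by (subst ereal_minus_le) auto
  qed
  then show ?thesis by (subst (asm) ereal_minus_le) auto
qed


lemma Mop_lip:
  assumes phi: "phi \<in> FF"
  shows "\<bar>real_of_ereal (Mop l lam phi x) - real_of_ereal (Mop l lam phi y)\<bar> \<le> Ll * \<bar>x - y\<bar>"
proof -
  have 1: "Mop l lam phi x \<le> Mop l lam phi y + ereal (Ll * \<bar>x - y\<bar>)"
    using Mop_shift[OF phi, of y "x - y"] by simp
  have 2: "Mop l lam phi y \<le> Mop l lam phi x + ereal (Ll * \<bar>x - y\<bar>)"
    using Mop_shift[OF phi, of x "y - x"] by (simp add: abs_minus_commute)
  show ?thesis using 1 2 Mop_fin[OF phi, of x] Mop_fin[OF phi, of y]
    by (cases "Mop l lam phi x"; cases "Mop l lam phi y"; simp add: abs_le_iff)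
qed

lemma Mop_meas:
  assumes phi: "phi \<in> FF"
  shows "(\<lambda>x. real_of_ereal (Mop l lam phi x)) \<in> borel_measurable borel"
proof -
  have "Ll-lipschitz_on UNIV (\<lambda>x. real_of_ereal (Mop l lam phi x))"
    by (rule lipschitz_onI) (use Mop_lip[OF phi] Ll_pos in \<open>auto simp: dist_real_def\<close>)
  then show ?thesis by (intro borel_measurable_continuous_onI lipschitz_on_continuous_on)
qed

lemma AE_shift_adm:
  assumes mu: "mu \<in> admissible x" and P: "Measurable.pred borel P" and ae: "AE y in lborel. P y"
  shows "AE \<xi> in mu. P (x + \<xi>)"
proof -
  have sm: "sets mu = sets lborel" and ac: "absolutely_continuous lborel mu"
    using mu unfolding admissible_iff absolutely_continuous_def by auto
  have "AE y in distr lborel borel ((+) x). P y" unfolding lborel_distr_plus by (rule ae)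
  then have "AE \<xi> in lborel. P (x + \<xi>)"
    by (subst (asm) AE_distr_iff) (use P in auto)
  then show ?thesis by (rule absolutely_continuous_AE[OF sm ac])
qed

lemma Mop_Linf_pt:
  assumes phi1: "phi1 \<in> FF" and phi2: "phi2 \<in> FF" and ae: "AE y in lborel. \<bar>phi1 y - phi2 y\<bar> \<le> L"
  shows "Mop l lam phi1 x \<le> Mop l lam phi2 x + ereal L"
proof -
  obtain b1 where m1[measurable]: "phi1 \<in> borel_measurable borel" and b1: "\<And>y. b1 \<le> phi1 y"
    using FF_props[OF phi1] by metis
  obtain b2 where m2[measurable]: "phi2 \<in> borel_measurable borel" and b2: "\<And>y. b2 \<le> phi2 y"
    using FF_props[OF phi2] by metis
  have "Mop l lam phi1 x - ereal L \<le> Mop l lam phi2 x"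
    unfolding Mop_def[of l lam phi2 x]
  proof (rule INF_greatest)
    fix mu assume mu: "mu \<in> admissible x"
    have pm: "prob_space mu" and sm: "sets mu = sets borel" using mu unfolding admissible_iff by auto
    have ae': "AE \<xi> in mu. \<bar>phi1 (x + \<xi>) - phi2 (x + \<xi>)\<bar> \<le> L"
      by (rule AE_shift_adm[OF mu _ ae]) measurable
    have "eint mu (\<lambda>\<xi>. phi1 (x + \<xi>) + l \<xi>) \<le> eint mu (\<lambda>\<xi>. (phi2 (x + \<xi>) + l \<xi>) + L)"
      by (rule eint_mono_AE) (use ae' in \<open>auto elim!: eventually_mono\<close>)
    also have "\<dots> = eint mu (\<lambda>\<xi>. phi2 (x + \<xi>) + l \<xi>) + ereal L"
      by (rule eint_shift[OF pm G_meas[OF sm m2], where c="b2 + K"]) (use b2 l_ge in \<open>simp add: add_mono\<close>)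
    finally have e1: "eint mu (\<lambda>\<xi>. phi1 (x + \<xi>) + l \<xi>) \<le> eint mu (\<lambda>\<xi>. phi2 (x + \<xi>) + l \<xi>) + ereal L" .
    have "Mop l lam phi1 x \<le> eint mu (\<lambda>\<xi>. phi1 (x + \<xi>) + l \<xi>) + ereal lam * DKL mu (Phi x)"
      unfolding Mop_def by (rule INF_lower[OF mu])
    also have "\<dots> \<le> (eint mu (\<lambda>\<xi>. phi2 (x + \<xi>) + l \<xi>) + ereal L) + ereal lam * DKL mu (Phi x)"
      by (rule add_right_mono[OF e1])
    also have "\<dots> = (eint mu (\<lambda>\<xi>. phi2 (x + \<xi>) + l \<xi>) + ereal lam * DKL mu (Phi x)) + ereal L"
      by (simp add: ac_simps)
    finally show "Mop l lam phi1 x - ereal L \<le> eint mu (\<lambda>\<xi>. phi2 (x + \<xi>) + l \<xi>) + ereal lam * DKL mu (Phi x)"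
      by (subst ereal_minus_le) auto
  qed
  then show ?thesis by (subst (asm) ereal_minus_le) auto
qed

lemma Mop_mono:
  assumes "\<And>y. phi1 y \<le> phi2 y"
  shows "Mop l lam phi1 x \<le> Mop l lam phi2 x"
  unfolding Mop_def
proof (rule INF_mono)
  fix mu assume mu: "mu \<in> admissible x"
  have "eint mu (\<lambda>\<xi>. phi1 (x + \<xi>) + l \<xi>) \<le> eint mu (\<lambda>\<xi>. phi2 (x + \<xi>) + l \<xi>)"
    by (rule eint_mono_AE, rule AE_I2) (use assms in simp)
  then show "\<exists>mu'\<in>admissible x. eint mu' (\<lambda>\<xi>. phi1 (x + \<xi>) + l \<xi>) + ereal lam * DKL mu' (Phi x)
      \<le> eint mu (\<lambda>\<xi>. phi2 (x + \<xi>) + l \<xi>) + ereal lam * DKL mu (Phi x)"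
    using mu by (intro bexI[of _ mu] add_right_mono) auto
qed

lemma Mop_concave:
  assumes phi1: "phi1 \<in> FF" and phi2: "phi2 \<in> FF" and eta: "0 \<le> \<eta>" "\<eta> \<le> 1"
  shows "ereal \<eta> * Mop l lam phi1 x + ereal (1 - \<eta>) * Mop l lam phi2 x
      \<le> Mop l lam (\<lambda>y. \<eta> * phi1 y + (1 - \<eta>) * phi2 y) x"
  unfolding Mop_def[of l lam "\<lambda>y. \<eta> * phi1 y + (1 - \<eta>) * phi2 y" x]
proof (rule INF_greatest)
  fix mu assume mu: "mu \<in> admissible x"
  obtain b1 where m1[measurable]: "phi1 \<in> borel_measurable borel" and b1: "\<And>y. b1 \<le> phi1 y"
    using FF_props[OF phi1] by metis
  obtain b2 where m2[measurable]: "phi2 \<in> borel_measurable borel" and b2: "\<And>y. b2 \<le> phi2 y"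
    using FF_props[OF phi2] by metis
  have pm: "prob_space mu" and sm: "sets mu = sets borel" using mu unfolding admissible_iff by auto
  have "eint mu (\<lambda>\<xi>. (\<eta> * phi1 (x + \<xi>) + (1 - \<eta>) * phi2 (x + \<xi>)) + l \<xi>)
      = eint mu (\<lambda>\<xi>. \<eta> * (phi1 (x + \<xi>) + l \<xi>) + (1 - \<eta>) * (phi2 (x + \<xi>) + l \<xi>))"
    by (simp add: algebra_simps)
  also have "\<dots> = ereal \<eta> * eint mu (\<lambda>\<xi>. phi1 (x + \<xi>) + l \<xi>) + ereal (1 - \<eta>) * eint mu (\<lambda>\<xi>. phi2 (x + \<xi>) + l \<xi>)"
    by (rule eint_comb[OF pm G_meas[OF sm m1] _ G_meas[OF sm m2] _ eta, where c="b1 + K" and d="b2 + K"])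
       (use b1 b2 l_ge in \<open>simp_all add: add_mono\<close>)
  finally have eq: "eint mu (\<lambda>\<xi>. (\<eta> * phi1 (x + \<xi>) + (1 - \<eta>) * phi2 (x + \<xi>)) + l \<xi>)
     = ereal \<eta> * eint mu (\<lambda>\<xi>. phi1 (x + \<xi>) + l \<xi>) + ereal (1 - \<eta>) * eint mu (\<lambda>\<xi>. phi2 (x + \<xi>) + l \<xi>)" .
  have h1: "Mop l lam phi1 x \<le> eint mu (\<lambda>\<xi>. phi1 (x + \<xi>) + l \<xi>) + ereal lam * DKL mu (Phi x)"
    unfolding Mop_def by (rule INF_lower[OF mu])
  have h2: "Mop l lam phi2 x \<le> eint mu (\<lambda>\<xi>. phi2 (x + \<xi>) + l \<xi>) + ereal lam * DKL mu (Phi x)"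
    unfolding Mop_def by (rule INF_lower[OF mu])
  have "ereal (min (b1 + K) 0) \<le> eint mu (\<lambda>\<xi>. phi1 (x + \<xi>) + l \<xi>)"
    by (rule eint_lower[OF pm]) (use b1 l_ge in \<open>simp add: add_mono\<close>)
  then have n1: "eint mu (\<lambda>\<xi>. phi1 (x + \<xi>) + l \<xi>) \<noteq> -\<infinity>" by (auto simp del: ereal_min)
  have "ereal (min (b2 + K) 0) \<le> eint mu (\<lambda>\<xi>. phi2 (x + \<xi>) + l \<xi>)"
    by (rule eint_lower[OF pm]) (use b2 l_ge in \<open>simp add: add_mono\<close>)
  then have n2: "eint mu (\<lambda>\<xi>. phi2 (x + \<xi>) + l \<xi>) \<noteq> -\<infinity>" by (auto simp del: ereal_min)
  have "ereal lam * ereal (-1) \<le> ereal lam * DKL mu (Phi x)"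
    by (rule ereal_mult_left_mono[OF DKL_lower]) (use lam_pos in simp)
  then have n3: "ereal lam * DKL mu (Phi x) \<noteq> -\<infinity>" by auto
  have f1: "\<bar>Mop l lam phi1 x\<bar> \<noteq> \<infinity>" and f2: "\<bar>Mop l lam phi2 x\<bar> \<noteq> \<infinity>"
    using Mop_fin[OF phi1, of x] Mop_fin[OF phi2, of x] by auto
  show "ereal \<eta> * Mop l lam phi1 x + ereal (1 - \<eta>) * Mop l lam phi2 x
      \<le> eint mu (\<lambda>\<xi>. \<eta> * phi1 (x + \<xi>) + (1 - \<eta>) * phi2 (x + \<xi>) + l \<xi>) + ereal lam * DKL mu (Phi x)"
    unfolding eq by (rule comb_ineq[OF eta f1 f2 h1 h2 n1 n2 n3])
qed


end

theorem lemma3p1: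
  fixes l :: "real \<Rightarrow> real" and K Ll lam :: real
  assumes K_pos: "K > 0"
    and l0: "l 0 = K" and l_min: "\<And>x. l 0 \<le> l x"
    and l_sub: "\<And>x y. l x + l y \<ge> l (x + y) + K"
    and l_coercive: "filterlim l at_top at_infinity"
    and Ll_pos: "Ll > 0" and l_lip: "Ll-lipschitz_on UNIV l"
    and lam_pos: "lam > 0"
  shows "(\<forall>phi \<in> FF. \<forall>x. Mop l lam phi x \<noteq> \<infinity> \<and> Mop l lam phi x \<noteq> - \<infinity>)
    \<and> (\<forall>phi1 \<in> FF. \<forall>phi2 \<in> FF.
         Linf (\<lambda>x. real_of_ereal (Mop l lam phi1 x) - real_of_ereal (Mop l lam phi2 x))
           \<le> Linf (\<lambda>x. phi1 x - phi2 x))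
    \<and> (\<forall>phi1 \<in> FF. \<forall>phi2 \<in> FF. \<forall>\<eta>::real. 0 \<le> \<eta> \<and> \<eta> \<le> 1 \<longrightarrow>
         (\<forall>x. ereal \<eta> * Mop l lam phi1 x + ereal (1 - \<eta>) * Mop l lam phi2 x
                \<le> Mop l lam (\<lambda>y. \<eta> * phi1 y + (1 - \<eta>) * phi2 y) x))
    \<and> (\<forall>phi1 \<in> FF. \<forall>phi2 \<in> FF. (\<forall>y. phi1 y \<le> phi2 y) \<longrightarrow>
         (\<forall>x. Mop l lam phi1 x \<le> Mop l lam phi2 x))"
proof -
  note ctx = K_pos l0 l_min Ll_pos l_lip lam_pos
  have i: "\<forall>phi \<in> FF. \<forall>x. Mop l lam phi x \<noteq> \<infinity> \<and> Mop l lam phi x \<noteq> - \<infinity>"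
    using Mop_fin[OF ctx] by blast
  have ii: "\<forall>phi1 \<in> FF. \<forall>phi2 \<in> FF.
         Linf (\<lambda>x. real_of_ereal (Mop l lam phi1 x) - real_of_ereal (Mop l lam phi2 x))
           \<le> Linf (\<lambda>x. phi1 x - phi2 x)"
  proof (intro ballI)
    fix phi1 phi2 assume phi1: "phi1 \<in> FF" and phi2: "phi2 \<in> FF"
    define L where "L = Linf (\<lambda>x. phi1 x - phi2 x)"
    have ae: "AE y in lborel. ereal \<bar>phi1 y - phi2 y\<bar> \<le> L" unfolding L_def Linf_def by (rule esssup_AE)
    show "Linf (\<lambda>x. real_of_ereal (Mop l lam phi1 x) - real_of_ereal (Mop l lam phi2 x)) \<le> L"
    proof (cases L)
      case PInf then show ?thesis by simp
    next
      case MInf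
      then have "AE y in (lborel::real measure). False" using ae by (auto elim: eventually_mono)
      then have "ae_filter (lborel::real measure) = bot" by (simp add: trivial_limit_def)
      then show ?thesis by (simp add: ae_filter_eq_bot_iff)
    next
      case (real r)
      have aer: "AE y in lborel. \<bar>phi1 y - phi2 y\<bar> \<le> r" using ae real by (auto elim: eventually_mono)
      have aer': "AE y in lborel. \<bar>phi2 y - phi1 y\<bar> \<le> r" using aer by (auto elim: eventually_mono simp: abs_minus_commute)
      have pt: "\<bar>real_of_ereal (Mop l lam phi1 x) - real_of_ereal (Mop l lam phi2 x)\<bar> \<le> r" for x
      proof -
        have 1: "Mop l lam phi1 x \<le> Mop l lam phi2 x + ereal r" by (rule Mop_Linf_pt[OF ctx phi1 phi2 aer])
        have 2: "Mop l lam phi2 x \<le> Mop l lam phi1 x + ereal r" by (rule Mop_Linf_pt[OF ctx phi2 phi1 aer'])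
        show ?thesis using 1 2 Mop_fin[OF ctx phi1, of x] Mop_fin[OF ctx phi2, of x]
          by (cases "Mop l lam phi1 x"; cases "Mop l lam phi2 x"; simp add: abs_le_iff)
      qed
      have meas: "(\<lambda>x. ereal \<bar>real_of_ereal (Mop l lam phi1 x) - real_of_ereal (Mop l lam phi2 x)\<bar>) \<in> borel_measurable lborel"
      proof -
        have [measurable]: "(\<lambda>x. real_of_ereal (Mop l lam phi1 x)) \<in> borel_measurable lborel"
          using Mop_meas[OF ctx phi1] by simp
        have [measurable]: "(\<lambda>x. real_of_ereal (Mop l lam phi2 x)) \<in> borel_measurable lborel"
          using Mop_meas[OF ctx phi2] by simp
        show ?thesis by measurable
      qed
      have "Linf (\<lambda>x. real_of_ereal (Mop l lam phi1 x) - real_of_ereal (Mop l lam phi2 x)) \<le> ereal r"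
        unfolding Linf_def by (rule esssup_I[OF meas]) (use pt in auto)
      then show ?thesis using real by simp
    qed
  qed
  have iii: "\<forall>phi1 \<in> FF. \<forall>phi2 \<in> FF. \<forall>\<eta>::real. 0 \<le> \<eta> \<and> \<eta> \<le> 1 \<longrightarrow>
         (\<forall>x. ereal \<eta> * Mop l lam phi1 x + ereal (1 - \<eta>) * Mop l lam phi2 x
                \<le> Mop l lam (\<lambda>y. \<eta> * phi1 y + (1 - \<eta>) * phi2 y) x)"
    using Mop_concave[OF ctx] by blast
  have iv: "\<forall>phi1 \<in> FF. \<forall>phi2 \<in> FF. (\<forall>y. phi1 y \<le> phi2 y) \<longrightarrow>
         (\<forall>x. Mop l lam phi1 x \<le> Mop l lam phi2 x)"
    using Mop_mono[OF ctx] by blast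
  show ?thesis using i ii iii iv by blast
qed

end
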